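(* For all $M,N\in\Lambda^{001}$, if $M\longrightarrow_\beta^\infty N$ then $\mathcal T(M)\mathrel{\widetilde{\longrightarrow}_r^*}\mathcal T(N)$; that is, there are an index set $I$, resource terms $s_i$ and finite sums $T_i$ ($i\in I$) such that $\mathcal T(M)=\{s_i : i\in I\}$, $\mathcal T(N)=\bigcup_{i\in I}T_i$ and $s_i\longrightarrow_r^* T_i$ for each $i\in I$.
   Context: Fix a set $\mathcal V$ of variables. A 001-infinitary λ-term is a possibly infinite tree built from variables $x\in\mathcal V$, abstractions $\lambda x.M$ and applications $(M)N$ ($N$ the argument), such that every infinite branch enters infinitely often the argument position of an application node; $\Lambda^{001}$ is the set of such terms, up to α-equivalence, with fresh variables always available. $M[N/x]$ is capture-avoiding substitution. One-step β-reduction $\longrightarrow_\beta$ is the contextual closure (finite derivations) of $(\lambda x.M)N\longrightarrow_\beta M[N/x]$; $\longrightarrow_\beta^*$ its reflexive-transitive closure. The infinitary reduction $\longrightarrow_\beta^\infty$ is defined by the rules below, with possibly infinite derivations in which every infinite branch passes infinitely often through the third premise of (@): (var) $M\longrightarrow_\beta^* x\Rightarrow M\longrightarrow_\beta^\infty x$; (λ) $M\longrightarrow_\beta^*\lambda x.P$, $P\longrightarrow_\beta^\infty P'$ $\Rightarrow M\longrightarrow_\beta^\infty\lambda x.P'$; (@) $M\longrightarrow_\beta^*(P)Q$, $P\longrightarrow_\beta^\infty P'$, $Q\longrightarrow_\beta^\infty Q'$ $\Rightarrow M\longrightarrow_\beta^\infty(P')Q'$. Resource terms: $s::=x\mid\lambda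 x.s\mid\langle s\rangle\bar t$, $\bar t=[t_1,\dots,t_n]$ a finite multiset of resource terms. Finite sums are finite sets of resource terms written additively ($0$ empty), constructors extended by linearity. Resource substitution $s\langle\bar t/x\rangle$ is the sum over $\sigma\in\mathfrak S_n$ of the terms obtained by substituting $t_{\sigma(i)}$ for the $i$-th free occurrence of $x$ in $s$ if $x$ has exactly $n$ free occurrences, and $0$ otherwise. Simple resource reduction $\longmapsto_r$ is the least relation from terms (resp. monomials) to finite sums containing $\langle\lambda x.s\rangle\bar t\longmapsto_r s\langle\bar t/x\rangle$ and closed under abstraction, function and argument positions of applications, and elements of monomials. On finite sums, $\sum_{i=0}^n s_i\longrightarrow_r\sum_{i=0}^n T_i$ when $s_0\longmapsto_r T_0$ and for $1\le i\le n$ either $s_i\longmapsto_r T_i$ or $T_i=s_i$; $\longrightarrow_r^*$ is the reflexive-transitive closure (a single term is identified with the one-element sum). For sets $\mathcal S,\mathcal S'$ of resource terms, $\mathcal S\mathrel{\widetilde{\longrightarrow}_r^*}\mathcal S'$ is as spelled out in the claim. Taylor approximation $\ltimes$ is inductive: $x\ltimes x$; $s\ltimes M\Rightarrow\lambda x.s\ltimes\lambda x.M$; ($s\ltimes M$ and $t_i\ltimes N$ for all $i$) $\Rightarrow\langle s\rangle[t_1,\dots,t_n]\ltimes(M)N$. $\mathcal T(M)=\{s : s\ltimes M\}$. *)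

theory Defs
  imports Main "HOL-Library.Multiset" "HOL-Library.Infinite_Set"
begin

section \<open>Infinitary lambda-terms (de Bruijn indices, so alpha-equivalence is syntactic identity)\<close>

codatatype lterm = Var nat | Lam lterm | App lterm lterm

datatype dir = Body | Fun | Arg

fun subterm_at :: "lterm \<Rightarrow> dir list \<Rightarrow> lterm option" where
  "subterm_at M [] = Some M"
| "subterm_at M (d # p) =
     (case (M, d) of
        (Lam P, Body) \<Rightarrow> subterm_at P p
      | (App P Q, Fun) \<Rightarrow> subterm_at P p
      | (App P Q, Arg) \<Rightarrow> subterm_at Q p
      | _ \<Rightarrow> None)"

definition is_branch :: "lterm \<Rightarrow> (nat \<Rightarrow> dir) \<Rightarrow> bool" where
  "is_branch M f \<longleftrightarrow> (\<forall>n. subterm_at M (map f [0..<n]) \<noteq> None)"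

definition is001 :: "lterm \<Rightarrow> bool" where
  "is001 M \<longleftrightarrow> (\<forall>f. is_branch M f \<longrightarrow> (\<exists>\<^sub>\<infinity>n. f n = Arg))"

primcorec lshift :: "nat \<Rightarrow> nat \<Rightarrow> lterm \<Rightarrow> lterm" where
  "lshift d c M = (case M of
      Var i \<Rightarrow> Var (if i < c then i else i + d)
    | Lam P \<Rightarrow> Lam (lshift d (Suc c) P)
    | App P Q \<Rightarrow> App (lshift d c P) (lshift d c Q))"

primcorec lsubst_at :: "nat \<Rightarrow> lterm \<Rightarrow> lterm \<Rightarrow> lterm" where
  "lsubst_at k N M = (case M of
      Var i \<Rightarrow> (if i < k then Var i else if i = k then
                  (case N of
                     Var j \<Rightarrow> Var (j + k)
                   | Lam P \<Rightarrow> Lam (lshift k 1 P)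
                   | App P Q \<Rightarrow> App (lshift k 0 P) (lshift k 0 Q))
                else Var (i - 1))
    | Lam P \<Rightarrow> Lam (lsubst_at (Suc k) N P)
    | App P Q \<Rightarrow> App (lsubst_at k N P) (lsubst_at k N Q))"

text \<open>M[N/x] where x is the variable bound by the redex abstraction (index 0).\<close>
definition lsubst :: "lterm \<Rightarrow> lterm \<Rightarrow> lterm" where
  "lsubst M N = lsubst_at 0 N M"

inductive beta :: "lterm \<Rightarrow> lterm \<Rightarrow> bool" where
  beta_redex: "beta (App (Lam M) N) (lsubst M N)"
| beta_lam: "beta M M' \<Longrightarrow> beta (Lam M) (Lam M')"
| beta_appL: "beta M M' \<Longrightarrow> beta (App M N) (App M' N)"
| beta_appR: "beta N N' \<Longrightarrow> beta (App M N) (App M N')"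

abbreviation betas :: "lterm \<Rightarrow> lterm \<Rightarrow> bool" where
  "betas \<equiv> beta\<^sup>*\<^sup>*"

text \<open>Infinitary reduction: rules (var), (lambda), (@) read inductively, except for the third premise
  of (@), which is read coinductively (every infinite derivation branch passes infinitely often
  through that premise).\<close>
inductive ired_step :: "(lterm \<Rightarrow> lterm \<Rightarrow> bool) \<Rightarrow> lterm \<Rightarrow> lterm \<Rightarrow> bool" for R where
  ired_var: "betas M (Var x) \<Longrightarrow> ired_step R M (Var x)"
| ired_lam: "betas M (Lam P) \<Longrightarrow> ired_step R P P' \<Longrightarrow> ired_step R M (Lam P')"
| ired_app: "betas M (App P Q) \<Longrightarrow> ired_step R P P' \<Longrightarrow> R Q Q' \<Longrightarrow> ired_step R M (App P' Q')"

lemma ired_step_mono: "R \<le> S \<Longrightarrow> ired_step R \<le> ired_step S"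
proof (intro le_funI le_boolI)
  fix M N assume RS: "R \<le> S" and h: "ired_step R M N"
  from h show "ired_step S M N"
    by (induction rule: ired_step.induct) (use RS in \<open>auto intro: ired_step.intros\<close>)
qed

coinductive ired :: "lterm \<Rightarrow> lterm \<Rightarrow> bool" where
  "ired_step ired M N \<Longrightarrow> ired M N"
monos ired_step_mono

datatype rterm = RVar nat | RLam rterm | RApp rterm "rterm multiset"

primrec rshift :: "nat \<Rightarrow> nat \<Rightarrow> rterm \<Rightarrow> rterm" where
  "rshift d c (RVar i) = RVar (if i < c then i else i + d)"
| "rshift d c (RLam s) = RLam (rshift d (Suc c) s)"
| "rshift d c (RApp s ts) = RApp (rshift d c s) (image_mset (rshift d c) ts)"

text \<open>rfill k s ts u: u is obtained from s by substituting, bijectively, the elements of the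
  multiset ts for the free occurrences of the variable with index k (under k binders);
  there is no such u unless the number of occurrences equals the size of ts.\<close>
inductive rfill :: "nat \<Rightarrow> rterm \<Rightarrow> rterm multiset \<Rightarrow> rterm \<Rightarrow> bool" where
  rfill_hit: "rfill k (RVar k) {#t#} (rshift k 0 t)"
| rfill_var: "i \<noteq> k \<Longrightarrow> rfill k (RVar i) {#} (RVar (if i < k then i else i - 1))"
| rfill_lam: "rfill (Suc k) s T u \<Longrightarrow> rfill k (RLam s) T (RLam u)"
| rfill_app: "rfill k s T0 s' \<Longrightarrow> (\<forall>x. x \<in># P \<longrightarrow> rfill k (fst x) (fst (snd x)) (snd (snd x)))
    \<Longrightarrow> rfill k (RApp s (image_mset fst P)) (T0 + sum_mset (image_mset (fst \<circ> snd) P))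
                (RApp s' (image_mset (snd \<circ> snd) P))"

text \<open>Resource substitution s<ts/x> (x = index 0), as a finite sum = finite set.\<close>
definition rsubst :: "rterm \<Rightarrow> rterm multiset \<Rightarrow> rterm set" where
  "rsubst s ts = {u. rfill 0 s ts u}"

inductive rstep :: "rterm \<Rightarrow> rterm set \<Rightarrow> bool"
  and mrstep :: "rterm multiset \<Rightarrow> rterm multiset set \<Rightarrow> bool" where
  rstep_redex: "rstep (RApp (RLam s) ts) (rsubst s ts)"
| rstep_lam: "rstep s S \<Longrightarrow> rstep (RLam s) (RLam ` S)"
| rstep_fun: "rstep s S \<Longrightarrow> rstep (RApp s ts) ((\<lambda>s'. RApp s' ts) ` S)"
| rstep_arg: "mrstep ts TS \<Longrightarrow> rstep (RApp s ts) (RApp s ` TS)"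
| mrstep_elem: "rstep t T \<Longrightarrow> mrstep (add_mset t ts) ((\<lambda>t'. add_mset t' ts) ` T)"

definition rsum_step :: "rterm set \<Rightarrow> rterm set \<Rightarrow> bool" where
  "rsum_step S S' \<longleftrightarrow> (\<exists>(n::nat) (s::nat \<Rightarrow> rterm) (T::nat \<Rightarrow> rterm set).
      S = s ` {..n} \<and> S' = (\<Union>i\<le>n. T i) \<and> rstep (s 0) (T 0) \<and>
      (\<forall>i\<in>{1..n}. rstep (s i) (T i) \<or> T i = {s i}))"

abbreviation rsum_steps :: "rterm set \<Rightarrow> rterm set \<Rightarrow> bool" where
  "rsum_steps \<equiv> rsum_step\<^sup>*\<^sup>*"

inductive taylor :: "rterm \<Rightarrow> lterm \<Rightarrow> bool" where
  "taylor (RVar x) (Var x)"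
| "taylor s M \<Longrightarrow> taylor (RLam s) (Lam M)"
| "taylor s M \<Longrightarrow> (\<forall>t. t \<in># ts \<longrightarrow> taylor t N) \<Longrightarrow> taylor (RApp s ts) (App M N)"

definition Taylor :: "lterm \<Rightarrow> rterm set" where
  "Taylor M = {s. taylor s M}"

end

theory Submission
  imports Defs
begin


lemma lshift_simps[simp]:
  "lshift d c (Var i) = Var (if i < c then i else i + d)"
  "lshift d c (Lam P) = Lam (lshift d (Suc c) P)"
  "lshift d c (App P Q) = App (lshift d c P) (lshift d c Q)"
  by (subst lshift.code; simp)+

lemma lsubst_at_simps[simp]:
  "lsubst_at k N (Var i) = (if i < k then Var i else if i = k then lshift k 0 N else Var (i - 1))"
  "lsubst_at k N (Lam P) = Lam (lsubst_at (Suc k) N P)"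
  "lsubst_at k N (App P Q) = App (lsubst_at k N P) (lsubst_at k N Q)"
    apply (subst lsubst_at.code)
    apply (cases N; simp)
   apply (subst lsubst_at.code; simp)
  apply (subst lsubst_at.code; simp)
  done

lemma taylor_Var[simp]: "taylor t (Var x) \<longleftrightarrow> t = RVar x"
  by (auto elim: taylor.cases intro: taylor.intros)
lemma taylor_Lam[simp]: "taylor t (Lam M) \<longleftrightarrow> (\<exists>s. t = RLam s \<and> taylor s M)"
  by (auto elim: taylor.cases intro: taylor.intros)
lemma taylor_App[simp]: "taylor t (App M N) \<longleftrightarrow> (\<exists>s ts. t = RApp s ts \<and> taylor s M \<and> (\<forall>u. u \<in># ts \<longrightarrow> taylor u N))"
  by (auto elim: taylor.cases intro: taylor.intros)

lemma taylor_RVar[simp]: "taylor (RVar x) M \<longleftrightarrow> M = Var x"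
  by (auto elim: taylor.cases intro: taylor.intros)
lemma taylor_RLam[simp]: "taylor (RLam s) M \<longleftrightarrow> (\<exists>P. M = Lam P \<and> taylor s P)"
  by (auto elim: taylor.cases intro: taylor.intros)
lemma taylor_RApp[simp]: "taylor (RApp s ts) M \<longleftrightarrow> (\<exists>P Q. M = App P Q \<and> taylor s P \<and> (\<forall>u. u \<in># ts \<longrightarrow> taylor u Q))"
  by (auto elim: taylor.cases intro: taylor.intros)

lemma taylor_shift: "taylor t N \<Longrightarrow> taylor (rshift d c t) (lshift d c N)"
  by (induction t N arbitrary: c rule: taylor.induct) auto

lemma taylor_shift_inv: "taylor u (lshift d c N) \<Longrightarrow> \<exists>t. u = rshift d c t \<and> taylor t N"
proof (induction u arbitrary: N c)
  case (RVar x)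
  then show ?case by (cases N) (auto split: if_splits)
next
  case (RLam u)
  show ?case
  proof (cases N)
    case (Lam P)
    then have "taylor u (lshift d (Suc c) P)" using RLam.prems by simp
    then obtain t where "u = rshift d (Suc c) t" "taylor t P" using RLam.IH by blast
    then show ?thesis using Lam by (intro exI[of _ "RLam t"]) simp
  qed (use RLam.prems in simp_all)
next
  case (RApp u0 us)
  show ?case
  proof (cases N)
    case (Var x1) then show ?thesis using RApp.prems by simp
  next
    case (Lam x2) then show ?thesis using RApp.prems by simp
  next
    case (App P Q)
    from RApp.prems App have h0: "taylor u0 (lshift d c P)" and h1: "\<forall>v. v \<in># us \<longrightarrow> taylor v (lshift d c Q)" by auto
    from RApp.IH(1)[OF h0] obtain t0 where t0: "u0 = rshift d c t0" "taylor t0 P" by blast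
    have "\<forall>v\<in>set_mset us. \<exists>t. v = rshift d c t \<and> taylor t Q" using RApp.IH(2) h1 by blast
    then obtain g where g: "\<And>v. v \<in># us \<Longrightarrow> v = rshift d c (g v) \<and> taylor (g v) Q" by metis
    have "us = image_mset (rshift d c) (image_mset g us)"
      using g by (simp add: multiset.map_comp) (metis (mono_tags, lifting) comp_apply multiset.map_cong0 multiset.map_ident)
    then show ?thesis using App t0 g
      by (intro exI[of _ "RApp t0 (image_mset g us)"]) auto
  qed
qed

lemma rfill_taylor:
  "rfill k s ts u \<Longrightarrow> taylor s M \<Longrightarrow> (\<forall>t. t \<in># ts \<longrightarrow> taylor t N) \<Longrightarrow> taylor u (lsubst_at k N M)"
proof (induction arbitrary: M rule: rfill.induct)
  case (rfill_hit k t)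
  then show ?case by (auto intro: taylor_shift)
next
  case (rfill_var i k)
  then show ?case by auto
next
  case (rfill_lam k s T u)
  then show ?case by auto
next
  case (rfill_app k s T0 s' P)
  from rfill_app.prems(1) obtain M1 M2 where M0: "M = App M1 M2" "taylor s M1"
     "\<forall>u. u \<in># image_mset fst P \<longrightarrow> taylor u M2"
    by auto
  then have M: "M = App M1 M2" "taylor s M1" "\<forall>x. x \<in># P \<longrightarrow> taylor (fst x) M2" by auto
  have A: "taylor s' (lsubst_at k N M1)" using rfill_app M by auto
  have B: "\<forall>x. x \<in># P \<longrightarrow> taylor (snd (snd x)) (lsubst_at k N M2)"
  proof (intro allI impI)
    fix x assume x: "x \<in># P"
    have "\<forall>t. t \<in># fst (snd x) \<longrightarrow> taylor t N"
      using rfill_app.prems(2) x by auto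
    then show "taylor (snd (snd x)) (lsubst_at k N M2)"
      using rfill_app.IH(2) x M(3) by blast
  qed
  show ?case using A B M by auto
qed

lemma rfill_taylor_inv_Var:
  assumes "taylor u (lsubst_at k N (Var i))"
  shows "\<exists>s ts. taylor s (Var i) \<and> (\<forall>t. t \<in># ts \<longrightarrow> taylor t N) \<and> rfill k s ts u"
proof (cases "i = k")
  case True
  then have "taylor u (lshift k 0 N)" using assms by simp
  then obtain t where "u = rshift k 0 t" "taylor t N" using taylor_shift_inv by blast
  then show ?thesis using True by (intro exI[of _ "RVar k"] exI[of _ "{#t#}"]) (auto intro: rfill.intros)
next
  case False
  then have u: "u = RVar (if i < k then i else i - 1)" using assms by (auto split: if_splits)
  have "rfill k (RVar i) {#} u" unfolding u by (rule rfill_var[OF False])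
  then show ?thesis by (intro exI[of _ "RVar i"] exI[of _ "{#}"]) auto
qed

lemma rfill_taylor_inv:
  "taylor u (lsubst_at k N M) \<Longrightarrow> \<exists>s ts. taylor s M \<and> (\<forall>t. t \<in># ts \<longrightarrow> taylor t N) \<and> rfill k s ts u"
proof (induction u arbitrary: M k)
  case (RVar x)
  then show ?case using rfill_taylor_inv_Var by (cases M) auto
next
  case (RLam u)
  show ?case
  proof (cases M)
    case (Var i) then show ?thesis using RLam.prems rfill_taylor_inv_Var by blast
  next
    case (Lam P)
    then have "taylor u (lsubst_at (Suc k) N P)" using RLam.prems by simp
    then obtain s ts where "taylor s P" "\<forall>t. t \<in># ts \<longrightarrow> taylor t N" "rfill (Suc k) s ts u"
      using RLam.IH by blast
    then show ?thesis using Lam by (intro exI[of _ "RLam s"] exI[of _ ts]) (auto intro: rfill.intros)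
  next
    case (App P Q) then show ?thesis using RLam.prems by simp
  qed
next
  case (RApp u0 us)
  show ?case
  proof (cases M)
    case (Var i) then show ?thesis using RApp.prems rfill_taylor_inv_Var by blast
  next
    case (Lam P) then show ?thesis using RApp.prems by simp
  next
    case (App P Q)
    from RApp.prems App have h0: "taylor u0 (lsubst_at k N P)"
      and h1: "\<forall>v. v \<in># us \<longrightarrow> taylor v (lsubst_at k N Q)" by auto
    from RApp.IH(1)[OF h0] obtain s0 T0 where s0: "taylor s0 P" "\<forall>t. t \<in># T0 \<longrightarrow> taylor t N" "rfill k s0 T0 u0"
      by blast
    have "\<forall>v\<in>set_mset us. \<exists>s ts. taylor s Q \<and> (\<forall>t. t \<in># ts \<longrightarrow> taylor t N) \<and> rfill k s ts v"
      using RApp.IH(2) h1 by blast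
    then have "\<forall>v\<in>set_mset us. \<exists>p. taylor (fst p) Q \<and> (\<forall>t. t \<in># snd p \<longrightarrow> taylor t N) \<and> rfill k (fst p) (snd p) v"
      by simp
    then obtain g where g: "\<And>v. v \<in># us \<Longrightarrow> taylor (fst (g v)) Q \<and> (\<forall>t. t \<in># snd (g v) \<longrightarrow> taylor t N) \<and> rfill k (fst (g v)) (snd (g v)) v"
      by metis
    define PP where "PP = image_mset (\<lambda>v. (fst (g v), snd (g v), v)) us"
    have e1: "image_mset (snd \<circ> snd) PP = us" unfolding PP_def by (simp add: multiset.map_comp comp_def)
    have r: "rfill k (RApp s0 (image_mset fst PP)) (T0 + \<Sum>\<^sub># (image_mset (fst \<circ> snd) PP)) (RApp u0 (image_mset (snd \<circ> snd) PP))"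
      by (rule rfill_app[OF s0(3)]) (auto simp: PP_def g)
    have t1: "taylor (RApp s0 (image_mset fst PP)) M" using App s0 g by (auto simp: PP_def)
    have t2: "\<forall>t. t \<in># T0 + \<Sum>\<^sub># (image_mset (fst \<circ> snd) PP) \<longrightarrow> taylor t N"
      using s0 g by (auto simp: PP_def)
    show ?thesis using r t1 t2 e1 by metis
  qed
qed


primrec sz :: "rterm \<Rightarrow> nat" where
  "sz (RVar i) = 1"
| "sz (RLam s) = Suc (sz s)"
| "sz (RApp s ts) = Suc (sz s + sum_mset (image_mset sz ts))"

lemma sz_pos: "sz t \<ge> 1"
  by (cases t) auto

lemma sz_rshift[simp]: "sz (rshift d c t) = sz t"
proof (induction t arbitrary: c)
  case (RApp s ts)
  have "image_mset sz (image_mset (rshift d c) ts) = image_mset sz ts"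
    using RApp.IH(2) by (simp add: multiset.map_comp comp_def cong: image_mset_cong)
  then show ?case using RApp.IH(1) by simp
qed auto

lemma sum_mset_sum_mset_image:
  "sum_mset (image_mset (f::_\<Rightarrow>nat) (sum_mset (image_mset g P))) = sum_mset (image_mset (\<lambda>x. sum_mset (image_mset f (g x))) P)"
  by (induction P) auto

lemma rfill_sz: "rfill k s ts u \<Longrightarrow> sz u \<le> sz s + sum_mset (image_mset sz ts)"
proof (induction rule: rfill.induct)
  case (rfill_app k s T0 s' P)
  have "sum_mset (image_mset sz (image_mset (snd \<circ> snd) P))
     \<le> sum_mset (image_mset (\<lambda>x. sz (fst x) + sum_mset (image_mset sz (fst (snd x)))) P)"
    unfolding multiset.map_comp using rfill_app.IH(2)
    by (intro sum_mset_mono) auto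
  also have "\<dots> = sum_mset (image_mset sz (image_mset fst P)) + sum_mset (image_mset sz (\<Sum>\<^sub># (image_mset (fst \<circ> snd) P)))"
    by (simp add: sum_mset_sum_mset_image multiset.map_comp comp_def sum_mset.distrib)
  finally show ?case using rfill_app.IH(1) by simp
qed auto

lemma rstep_sz:
  "(rstep s S \<longrightarrow> (\<forall>t\<in>S. sz t \<le> sz s)) \<and> (mrstep ts TS \<longrightarrow> (\<forall>us\<in>TS. sum_mset (image_mset sz us) \<le> sum_mset (image_mset sz ts)))"
proof (induction rule: rstep_mrstep.induct)
  case (rstep_redex s ts)
  show ?case
  proof
    fix t assume "t \<in> rsubst s ts"
    then have "sz t \<le> sz s + sum_mset (image_mset sz ts)" using rfill_sz unfolding rsubst_def by blast
    then show "sz t \<le> sz (RApp (RLam s) ts)" by simp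
  qed
next
  case (rstep_lam s S)
  then show ?case by force
next
  case (rstep_fun s S ts)
  then show ?case by force
next
  case (rstep_arg ts TS s)
  then show ?case by force
next
  case (mrstep_elem t T ts)
  then show ?case by force
qed

lemma rsum_steps_sz: "rsum_steps S S' \<Longrightarrow> t \<in> S' \<Longrightarrow> \<exists>s\<in>S. sz t \<le> sz s"
proof (induction arbitrary: t rule: rtranclp_induct)
  case (step S' S'')
  then obtain n :: nat and s T where st: "S' = s ` {..n}" "S'' = (\<Union>i\<le>n. T i)" "rstep (s 0) (T 0)"
      "\<forall>i\<in>{1..n}. rstep (s i) (T i) \<or> T i = {s i}"
    unfolding rsum_step_def by blast
  from step.prems st obtain i where i: "i \<le> n" "t \<in> T i" by blast
  have "sz t \<le> sz (s i)"
  proof (cases "i = 0")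
    case True then show ?thesis using st i rstep_sz by blast
  next
    case False then have "i \<in> {1..n}" using i by auto
    then show ?thesis using st i rstep_sz by fastforce
  qed
  moreover have "s i \<in> S'" using st i by auto
  ultimately show ?case using step.IH by (meson le_trans)
qed auto


lemma finite_submsets: "finite {T. T \<subseteq># (M::'a multiset)}"
proof -
  have "{T. T \<subseteq># M} \<subseteq> (\<Union>n\<in>{..size M}. multisets_of_size (set_mset M) n)"
    by (auto simp: multisets_of_size_def dest: set_mset_mono size_mset_mono)
  moreover have "finite (\<Union>n\<in>{..size M}. multisets_of_size (set_mset M) n)"
    by (intro finite_UN_I) auto
  ultimately show ?thesis by (rule finite_subset)
qed

lemma subset_sum_mset_image: "x \<in># P \<Longrightarrow> f x \<subseteq># sum_mset (image_mset f P)"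
  by (metis image_mset_add_mset multi_member_split mset_subset_eq_add_left sum_mset.insert)

inductive_cases rfill_VarE: "rfill k (RVar i) ts u"
inductive_cases rfill_LamE: "rfill k (RLam s) ts u"
inductive_cases rfill_AppE: "rfill k (RApp s ss) ts u"

lemma rfill_finite: "finite {u. rfill k s ts u}"
proof (induction s arbitrary: k ts)
  case (RVar i)
  have "{u. rfill k (RVar i) ts u} \<subseteq> rshift k 0 ` set_mset ts \<union> {RVar (if i < k then i else i - 1)}"
    by (auto elim: rfill_VarE)
  then show ?case by (rule finite_subset) auto
next
  case (RLam s)
  have "{u. rfill k (RLam s) ts u} \<subseteq> RLam ` {u. rfill (Suc k) s ts u}"
    by (auto elim: rfill_LamE)
  then show ?case by (rule finite_subset) (use RLam.IH in auto)
next
  case (RApp s ss)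
  define Sub where "Sub = {T. T \<subseteq># ts}"
  have fS: "finite Sub" unfolding Sub_def by (rule finite_submsets)
  define A where "A = (\<Union>T\<in>Sub. {u. rfill k s T u})"
  define B where "B = (\<Union>x\<in>set_mset ss. \<Union>T\<in>Sub. {u. rfill k x T u})"
  have fA: "finite A" unfolding A_def using fS RApp.IH(1) by blast
  have fB: "finite B" unfolding B_def using fS RApp.IH(2) by blast
  have "{u. rfill k (RApp s ss) ts u} \<subseteq> (\<lambda>(a,b). RApp a b) ` (A \<times> multisets_of_size B (size ss))"
  proof
    fix u assume "u \<in> {u. rfill k (RApp s ss) ts u}"
    then have "rfill k (RApp s ss) ts u" by simp
    then obtain T0 s' P where h: "ss = image_mset fst P" "ts = T0 + \<Sum>\<^sub># (image_mset (fst \<circ> snd) P)"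
       "u = RApp s' (image_mset (snd \<circ> snd) P)" "rfill k s T0 s'"
       "\<forall>x. x \<in># P \<longrightarrow> rfill k (fst x) (fst (snd x)) (snd (snd x))"
      by (elim rfill_AppE) (metis prod.collapse)
    have "T0 \<subseteq># ts" using h(2) by simp
    then have "s' \<in> A" unfolding A_def Sub_def using h(4) by blast
    moreover have "image_mset (snd \<circ> snd) P \<in> multisets_of_size B (size ss)"
    proof -
      have "\<And>x. x \<in># P \<Longrightarrow> snd (snd x) \<in> B"
      proof -
        fix x assume x: "x \<in># P"
        have "fst (snd x) \<subseteq># ts" using h(2) subset_sum_mset_image[OF x, of "fst \<circ> snd"]
          by (metis comp_apply mset_subset_eq_add_right subset_mset.order_trans)
        then show "snd (snd x) \<in> B" unfolding B_def Sub_def using x h by force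
      qed
      then show ?thesis using h(1) by (auto simp: multisets_of_size_def)
    qed
    ultimately show "u \<in> (\<lambda>(a,b). RApp a b) ` (A \<times> multisets_of_size B (size ss))"
      using h(3) by force
  qed
  moreover have "finite ((\<lambda>(a,b). RApp a b) ` (A \<times> multisets_of_size B (size ss)))"
    using fA fB by auto
  ultimately show ?case by (rule finite_subset)
qed

lemma rsubst_finite: "finite (rsubst s ts)"
  unfolding rsubst_def by (rule rfill_finite)

lemma rstep_finite: "(rstep s S \<longrightarrow> finite S) \<and> (mrstep ts TS \<longrightarrow> finite TS)"
  by (induction rule: rstep_mrstep.induct) (auto simp: rsubst_finite)


lemma rsum_stepI:
  assumes "rstep s0 T0" "\<forall>(x,X)\<in>set xs. rstep x X \<or> X = {x}"
  shows "rsum_step (insert s0 (fst ` set xs)) (T0 \<union> \<Union>(snd ` set xs))"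
proof -
  define n where "n = length xs"
  define s where "s i = (if i = 0 then s0 else fst (xs!(i-1)))" for i
  define T where "T i = (if i = 0 then T0 else snd (xs!(i-1)))" for i
  have 1: "s ` {..n} = insert s0 (fst ` set xs)"
  proof
    show "s ` {..n} \<subseteq> insert s0 (fst ` set xs)"
      by (auto simp: s_def n_def)
    show "insert s0 (fst ` set xs) \<subseteq> s ` {..n}"
    proof
      fix x assume "x \<in> insert s0 (fst ` set xs)"
      then consider "x = s0" | j where "j < n" "x = fst (xs!j)"
        by (auto simp: in_set_conv_nth n_def)
      then show "x \<in> s ` {..n}"
      proof cases
        case 1 then show ?thesis by (auto simp: s_def intro!: image_eqI[of _ _ 0])
      next
        case 2 then show ?thesis by (auto simp: s_def intro!: image_eqI[of _ _ "Suc j"])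
      qed
    qed
  qed
  have 2: "(\<Union>i\<le>n. T i) = T0 \<union> \<Union>(snd ` set xs)"
  proof
    show "(\<Union>i\<le>n. T i) \<subseteq> T0 \<union> \<Union>(snd ` set xs)"
      by (auto simp: T_def n_def split: if_splits)
    show "T0 \<union> \<Union>(snd ` set xs) \<subseteq> (\<Union>i\<le>n. T i)"
    proof
      fix x assume "x \<in> T0 \<union> \<Union>(snd ` set xs)"
      then consider "x \<in> T0" | j where "j < n" "x \<in> snd (xs!j)"
        by (auto simp: in_set_conv_nth n_def)
      then show "x \<in> (\<Union>i\<le>n. T i)"
      proof cases
        case 1 then show ?thesis by (auto simp: T_def intro!: bexI[of _ 0])
      next
        case 2 then show ?thesis by (auto simp: T_def intro!: bexI[of _ "Suc j"])
      qed
    qed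
  qed
  have 3: "\<forall>i\<in>{1..n}. rstep (s i) (T i) \<or> T i = {s i}"
  proof
    fix i assume "i \<in> {1..n}"
    then have "xs!(i-1) \<in> set xs" "i \<noteq> 0" by (auto simp: n_def)
    then show "rstep (s i) (T i) \<or> T i = {s i}" using assms(2) by (auto simp: s_def T_def)
  qed
  show ?thesis unfolding rsum_step_def
    by (rule exI[of _ n], rule exI[of _ s], rule exI[of _ T]) (use 1 2 3 assms(1) in \<open>auto simp: s_def T_def\<close>)
qed

lemma rsum_stepE:
  assumes "rsum_step S S'"
  obtains s0 T0 xs where "rstep s0 T0" "\<forall>(x,X)\<in>set xs. rstep x X \<or> X = {x}"
    "S = insert s0 (fst ` set xs)" "S' = T0 \<union> \<Union>(snd ` set xs)"
proof -
  from assms obtain n :: nat and s T where st: "S = s ` {..n}" "S' = (\<Union>i\<le>n. T i)" "rstep (s 0) (T 0)"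
      "\<forall>i\<in>{1..n}. rstep (s i) (T i) \<or> T i = {s i}"
    unfolding rsum_step_def by blast
  define xs where "xs = map (\<lambda>i. (s i, T i)) [1..<Suc n]"
  have e: "{..n} = insert 0 {1..n}" by auto
  have sx: "set xs = (\<lambda>i. (s i, T i)) ` {1..n}" unfolding xs_def by auto
  have "\<forall>(x,X)\<in>set xs. rstep x X \<or> X = {x}" using st(4) unfolding sx by auto
  moreover have "S = insert (s 0) (fst ` set xs)" unfolding st(1) sx e by (simp add: image_image)
  moreover have "S' = T 0 \<union> \<Union>(snd ` set xs)" unfolding st(2) sx e by (simp add: image_image)
  ultimately show ?thesis using that st(3) by blast
qed

lemma rstep_rsum_steps: "rstep s T \<Longrightarrow> rsum_steps {s} T"
  using rsum_stepI[of s T "[]"] by auto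

lemma rsum_step_union: "rsum_step S S' \<Longrightarrow> finite R \<Longrightarrow> rsum_step (S \<union> R) (S' \<union> R)"
proof -
  assume a: "rsum_step S S'" "finite R"
  then obtain rs where R: "R = set rs" using finite_list by blast
  from a(1) obtain s0 T0 xs where h: "rstep s0 T0" "\<forall>(x,X)\<in>set xs. rstep x X \<or> X = {x}"
    "S = insert s0 (fst ` set xs)" "S' = T0 \<union> \<Union>(snd ` set xs)" by (rule rsum_stepE)
  have "rsum_step (insert s0 (fst ` set (xs @ map (\<lambda>r. (r,{r})) rs))) (T0 \<union> \<Union>(snd ` set (xs @ map (\<lambda>r. (r,{r})) rs)))"
    by (rule rsum_stepI) (use h in auto)
  moreover have "insert s0 (fst ` set (xs @ map (\<lambda>r. (r,{r})) rs)) = S \<union> R" using h R by (simp add: image_image image_Un insert_commute)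
  moreover have "T0 \<union> \<Union>(snd ` set (xs @ map (\<lambda>r. (r,{r})) rs)) = S' \<union> R" using h R by (auto simp: image_image)
  ultimately show ?thesis by simp
qed

lemma rsum_steps_union: "rsum_steps S S' \<Longrightarrow> finite R \<Longrightarrow> rsum_steps (S \<union> R) (S' \<union> R)"
proof (induction rule: rtranclp_induct)
  case (step y z)
  then show ?case using rsum_step_union by (meson rtranclp.rtrancl_into_rtrancl)
qed auto

lemma rsum_steps_union2:
  "rsum_steps S1 S1' \<Longrightarrow> rsum_steps S2 S2' \<Longrightarrow> finite S2 \<Longrightarrow> finite S1' \<Longrightarrow> rsum_steps (S1 \<union> S2) (S1' \<union> S2')"
proof -
  assume a: "rsum_steps S1 S1'" "rsum_steps S2 S2'" "finite S2" "finite S1'"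
  have "rsum_steps (S1 \<union> S2) (S1' \<union> S2)" using rsum_steps_union a by blast
  moreover have "rsum_steps (S2 \<union> S1') (S2' \<union> S1')" using rsum_steps_union a by blast
  ultimately show ?thesis by (simp add: Un_commute)
qed

lemma rsum_steps_UN:
  "finite A \<Longrightarrow> (\<forall>a\<in>A. rsum_steps {a} (U a) \<and> finite (U a)) \<Longrightarrow> rsum_steps A (\<Union>(U ` A))"
proof (induction rule: finite_induct)
  case empty
  then show ?case by simp
next
  case (insert a A)
  have "rsum_steps ({a} \<union> A) (U a \<union> \<Union>(U ` A))"
    by (rule rsum_steps_union2) (use insert in auto)
  then show ?case by simp
qed

lemma rsum_steps_bind:
  "rsum_steps {s} T \<Longrightarrow> finite T \<Longrightarrow> (\<forall>t\<in>T. rsum_steps {t} (U t) \<and> finite (U t)) \<Longrightarrow> rsum_steps {s} (\<Union>(U ` T))"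
  using rsum_steps_UN[of T U] by auto

lemma rsum_steps_ctx:
  assumes f: "\<And>x X. rstep x X \<Longrightarrow> rstep (f x) (f ` X)"
  shows "rsum_steps S S' \<Longrightarrow> rsum_steps (f ` S) (f ` S')"
proof (induction rule: rtranclp_induct)
  case (step y z)
  from step.hyps(2) obtain s0 T0 xs where h: "rstep s0 T0" "\<forall>(x,X)\<in>set xs. rstep x X \<or> X = {x}"
    "y = insert s0 (fst ` set xs)" "z = T0 \<union> \<Union>(snd ` set xs)" by (rule rsum_stepE)
  have "rsum_step (insert (f s0) (fst ` set (map (\<lambda>(x,X). (f x, f ` X)) xs))) (f ` T0 \<union> \<Union>(snd ` set (map (\<lambda>(x,X). (f x, f ` X)) xs)))"
  proof (rule rsum_stepI)
    show "rstep (f s0) (f ` T0)" by (rule f[OF h(1)])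
    show "\<forall>(x,X)\<in>set (map (\<lambda>(x,X). (f x, f ` X)) xs). rstep x X \<or> X = {x}"
    proof
      fix p assume "p \<in> set (map (\<lambda>(x,X). (f x, f ` X)) xs)"
      then obtain x X where p: "p = (f x, f ` X)" "(x, X) \<in> set xs" by auto
      then have "rstep x X \<or> X = {x}" using h(2) by auto
      then have "rstep (f x) (f ` X) \<or> f ` X = {f x}" using f by auto
      then show "case p of (x, X) \<Rightarrow> rstep x X \<or> X = {x}" using p by simp
    qed
  qed
  moreover have m1: "fst ` set (map (\<lambda>(x,X). (f x, f ` X)) xs) = f ` (fst ` set xs)"
    by (induction xs) auto
  moreover have m2: "\<Union>(snd ` set (map (\<lambda>(x,X). (f x, f ` X)) xs)) = f ` \<Union>(snd ` set xs)"
    by (induction xs) auto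
  moreover have "insert (f s0) (fst ` set (map (\<lambda>(x,X). (f x, f ` X)) xs)) = f ` y"
    unfolding m1 h(3) by simp
  moreover have "f ` T0 \<union> \<Union>(snd ` set (map (\<lambda>(x,X). (f x, f ` X)) xs)) = f ` z"
    unfolding m2 h(4) by (simp add: image_Un)
  ultimately show ?case using step.IH by (metis rtranclp.rtrancl_into_rtrancl)
qed auto


lemma rsum_steps_UN_img:
  "finite A \<Longrightarrow> (\<forall>a\<in>A. rsum_steps {g a} (U a) \<and> finite (U a)) \<Longrightarrow> rsum_steps (g ` A) (\<Union>(U ` A))"
proof (induction rule: finite_induct)
  case empty
  then show ?case by simp
next
  case (insert a A)
  have "rsum_steps ({g a} \<union> g ` A) (U a \<union> \<Union>(U ` A))"
    by (rule rsum_steps_union2) (use insert in auto)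
  then show ?case by simp
qed

fun Cset :: "rterm \<Rightarrow> rterm multiset \<Rightarrow> (rterm \<times> rterm set) list \<Rightarrow> rterm set" where
  "Cset s ms [] = {RApp s ms}"
| "Cset s ms (p # xs) = (\<Union>u\<in>snd p. Cset s (add_mset u ms) xs)"

lemma Cset_finite: "\<forall>p\<in>set xs. finite (snd p) \<Longrightarrow> finite (Cset s ms xs)"
  by (induction xs arbitrary: ms) auto

lemma Cset_taylor: "taylor s M \<Longrightarrow> (\<forall>u. u \<in># ms \<longrightarrow> taylor u N) \<Longrightarrow> (\<forall>p\<in>set xs. \<forall>u\<in>snd p. taylor u N)
   \<Longrightarrow> v \<in> Cset s ms xs \<Longrightarrow> taylor v (App M N)"
proof (induction xs arbitrary: ms)
  case (Cons p xs)
  then obtain u where u: "u \<in> snd p" "v \<in> Cset s (add_mset u ms) xs" by auto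
  have "\<forall>w. w \<in># add_mset u ms \<longrightarrow> taylor w N" using Cons.prems u by auto
  then show ?case using Cons.IH[of "add_mset u ms"] Cons.prems u by simp
qed auto

lemma Cset_mem: "list_all2 (\<lambda>u p. u \<in> snd p) us xs \<Longrightarrow> RApp s (ms + mset us) \<in> Cset s ms xs"
proof (induction xs arbitrary: us ms)
  case Nil
  then show ?case by simp
next
  case (Cons p xs)
  then obtain u us' where us: "us = u # us'" "u \<in> snd p" "list_all2 (\<lambda>u p. u \<in> snd p) us' xs"
    by (cases us) auto
  have "RApp s (add_mset u ms + mset us') \<in> Cset s (add_mset u ms) xs" using Cons.IH us(3) by blast
  then show ?case using us by auto
qed

lemma Cset_steps: "\<forall>p\<in>set xs. rsum_steps {fst p} (snd p) \<and> finite (snd p) \<Longrightarrow>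
  rsum_steps {RApp s (ms + mset (map fst xs))} (Cset s ms xs)"
proof (induction xs arbitrary: ms)
  case Nil
  then show ?case by simp
next
  case (Cons p xs)
  define f where "f t = RApp s (add_mset t (ms + mset (map fst xs)))" for t
  have fc: "rstep (f x) (f ` X)" if "rstep x X" for x X
  proof -
    have "mrstep (add_mset x (ms + mset (map fst xs))) ((\<lambda>t'. add_mset t' (ms + mset (map fst xs))) ` X)"
      by (rule mrstep_elem[OF that])
    from rstep_arg[OF this, of s] show ?thesis by (simp add: f_def image_image)
  qed
  have 1: "rsum_steps (f ` {fst p}) (f ` snd p)"
    by (rule rsum_steps_ctx[OF fc]) (use Cons.prems in auto)
  have 2: "rsum_steps (f ` snd p) (\<Union>u\<in>snd p. Cset s (add_mset u ms) xs)"
  proof (rule rsum_steps_UN_img)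
    show "finite (snd p)" using Cons.prems by auto
    show "\<forall>a\<in>snd p. rsum_steps {f a} (Cset s (add_mset a ms) xs) \<and> finite (Cset s (add_mset a ms) xs)"
    proof
      fix a assume "a \<in> snd p"
      have "rsum_steps {RApp s (add_mset a ms + mset (map fst xs))} (Cset s (add_mset a ms) xs)"
        using Cons.IH[of "add_mset a ms"] Cons.prems by simp
      moreover have "finite (Cset s (add_mset a ms) xs)" using Cons.prems by (intro Cset_finite) auto
      ultimately show "rsum_steps {f a} (Cset s (add_mset a ms) xs) \<and> finite (Cset s (add_mset a ms) xs)"
        by (simp add: f_def)
    qed
  qed
  have "f (fst p) = RApp s (ms + mset (map fst (p # xs)))" by (simp add: f_def)
  then show ?case using 1 2 by (metis Cset.simps(2) image_empty image_insert rtranclp_trans)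
qed


definition fwd :: "lterm \<Rightarrow> lterm \<Rightarrow> bool" where
  "fwd M N \<longleftrightarrow> (\<forall>s. taylor s M \<longrightarrow> (\<exists>T. finite T \<and> (\<forall>t\<in>T. taylor t N) \<and> rsum_steps {s} T))"

definition bwd :: "lterm \<Rightarrow> lterm \<Rightarrow> bool" where
  "bwd M N \<longleftrightarrow> (\<forall>u. taylor u N \<longrightarrow> (\<exists>s T. taylor s M \<and> finite T \<and> u \<in> T \<and> (\<forall>t\<in>T. taylor t N) \<and> rsum_steps {s} T))"

definition sim :: "lterm \<Rightarrow> lterm \<Rightarrow> bool" where
  "sim M N \<longleftrightarrow> fwd M N \<and> bwd M N"

lemma sim_refl: "sim M M"
  unfolding sim_def fwd_def bwd_def by (metis empty_iff finite.emptyI finite.insertI insert_iff rtranclp.rtrancl_refl)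

lemma fwd_trans: assumes "fwd M1 M2" "fwd M2 M3" shows "fwd M1 M3"
  unfolding fwd_def
proof (intro allI impI)
  fix s assume "taylor s M1"
  then obtain T where T: "finite T" "\<forall>t\<in>T. taylor t M2" "rsum_steps {s} T" using assms(1) unfolding fwd_def by blast
  have "\<forall>t\<in>T. \<exists>U. finite U \<and> (\<forall>x\<in>U. taylor x M3) \<and> rsum_steps {t} U" using T(2) assms(2) unfolding fwd_def by blast
  then obtain V where V: "\<And>t. t \<in> T \<Longrightarrow> finite (V t) \<and> (\<forall>x\<in>V t. taylor x M3) \<and> rsum_steps {t} (V t)" by metis
  have "rsum_steps {s} (\<Union>(V ` T))" using rsum_steps_bind[OF T(3) T(1)] V by blast
  then show "\<exists>T. finite T \<and> (\<forall>t\<in>T. taylor t M3) \<and> rsum_steps {s} T"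
    using V T(1) by (intro exI[of _ "\<Union>(V ` T)"]) auto
qed

lemma sim_trans: assumes "sim M1 M2" "sim M2 M3" shows "sim M1 M3"
proof -
  have f: "fwd M1 M3" using assms fwd_trans unfolding sim_def by blast
  have "bwd M1 M3"
    unfolding bwd_def
  proof (intro allI impI)
    fix u assume "taylor u M3"
    then obtain s1 T1 where s1: "taylor s1 M2" "finite T1" "u \<in> T1" "\<forall>t\<in>T1. taylor t M3" "rsum_steps {s1} T1"
      using assms(2) unfolding sim_def bwd_def by blast
    then obtain s T0 where s: "taylor s M1" "finite T0" "s1 \<in> T0" "\<forall>t\<in>T0. taylor t M2" "rsum_steps {s} T0"
      using assms(1) unfolding sim_def bwd_def by blast
    have "\<forall>t\<in>T0. \<exists>U. finite U \<and> (\<forall>x\<in>U. taylor x M3) \<and> rsum_steps {t} U" using s(4) assms(2) unfolding sim_def fwd_def by blast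
    then obtain V where V: "\<And>t. t \<in> T0 \<Longrightarrow> finite (V t) \<and> (\<forall>x\<in>V t. taylor x M3) \<and> rsum_steps {t} (V t)" by metis
    define W where "W t = (if t = s1 then T1 else V t)" for t
    have W: "\<And>t. t \<in> T0 \<Longrightarrow> finite (W t) \<and> (\<forall>x\<in>W t. taylor x M3) \<and> rsum_steps {t} (W t)"
      using V s1 by (simp add: W_def)
    have "rsum_steps {s} (\<Union>(W ` T0))" using rsum_steps_bind[OF s(5) s(2)] W by blast
    moreover have "u \<in> \<Union>(W ` T0)" using s(3) s1(3) by (auto simp: W_def intro!: bexI[of _ s1])
    ultimately show "\<exists>s T. taylor s M1 \<and> finite T \<and> u \<in> T \<and> (\<forall>t\<in>T. taylor t M3) \<and> rsum_steps {s} T"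
      using s(1,2) W by (intro exI[of _ s] exI[of _ "\<Union>(W ` T0)"]) auto
  qed
  then show ?thesis using f unfolding sim_def by blast
qed

lemma sim_lam: assumes "sim M N" shows "sim (Lam M) (Lam N)"
proof -
  have ctx: "rsum_steps S S' \<Longrightarrow> rsum_steps (RLam ` S) (RLam ` S')" for S S'
    by (rule rsum_steps_ctx) (rule rstep_lam)
  have "fwd (Lam M) (Lam N)" unfolding fwd_def
  proof (intro allI impI)
    fix s assume "taylor s (Lam M)"
    then obtain s0 where s0: "s = RLam s0" "taylor s0 M" by auto
    then obtain T where T: "finite T" "\<forall>t\<in>T. taylor t N" "rsum_steps {s0} T" using assms unfolding sim_def fwd_def by blast
    show "\<exists>T. finite T \<and> (\<forall>t\<in>T. taylor t (Lam N)) \<and> rsum_steps {s} T"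
      using T ctx[OF T(3)] s0 by (intro exI[of _ "RLam ` T"]) auto
  qed
  moreover have "bwd (Lam M) (Lam N)" unfolding bwd_def
  proof (intro allI impI)
    fix u assume "taylor u (Lam N)"
    then obtain u0 where u0: "u = RLam u0" "taylor u0 N" by auto
    then obtain s T where T: "taylor s M" "finite T" "u0 \<in> T" "\<forall>t\<in>T. taylor t N" "rsum_steps {s} T"
      using assms unfolding sim_def bwd_def by blast
    show "\<exists>s T. taylor s (Lam M) \<and> finite T \<and> u \<in> T \<and> (\<forall>t\<in>T. taylor t (Lam N)) \<and> rsum_steps {s} T"
      using T ctx[OF T(5)] u0 by (intro exI[of _ "RLam s"] exI[of _ "RLam ` T"]) auto
  qed
  ultimately show ?thesis unfolding sim_def by blast
qed

lemma sim_appL: assumes "sim M M'" shows "sim (App M N) (App M' N)"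
proof -
  have ctx: "rsum_steps S S' \<Longrightarrow> rsum_steps ((\<lambda>x. RApp x ts) ` S) ((\<lambda>x. RApp x ts) ` S')" for S S' ts
    by (rule rsum_steps_ctx) (rule rstep_fun)
  have "fwd (App M N) (App M' N)" unfolding fwd_def
  proof (intro allI impI)
    fix s assume "taylor s (App M N)"
    then obtain s0 ts where s0: "s = RApp s0 ts" "taylor s0 M" "\<forall>u. u \<in># ts \<longrightarrow> taylor u N" by auto
    then obtain T where T: "finite T" "\<forall>t\<in>T. taylor t M'" "rsum_steps {s0} T" using assms unfolding sim_def fwd_def by blast
    show "\<exists>T. finite T \<and> (\<forall>t\<in>T. taylor t (App M' N)) \<and> rsum_steps {s} T"
      using T ctx[OF T(3), of ts] s0 by (intro exI[of _ "(\<lambda>x. RApp x ts) ` T"]) auto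
  qed
  moreover have "bwd (App M N) (App M' N)" unfolding bwd_def
  proof (intro allI impI)
    fix u assume "taylor u (App M' N)"
    then obtain u0 us where u0: "u = RApp u0 us" "taylor u0 M'" "\<forall>v. v \<in># us \<longrightarrow> taylor v N" by auto
    then obtain s T where T: "taylor s M" "finite T" "u0 \<in> T" "\<forall>t\<in>T. taylor t M'" "rsum_steps {s} T"
      using assms unfolding sim_def bwd_def by blast
    show "\<exists>s T. taylor s (App M N) \<and> finite T \<and> u \<in> T \<and> (\<forall>t\<in>T. taylor t (App M' N)) \<and> rsum_steps {s} T"
      using T ctx[OF T(5), of us] u0 by (intro exI[of _ "RApp s us"] exI[of _ "(\<lambda>x. RApp x us) ` T"]) auto
  qed
  ultimately show ?thesis unfolding sim_def by blast
qed


lemma sim_appR: assumes "sim N N'" shows "sim (App M N) (App M N')"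
proof -
  have "fwd (App M N) (App M N')" unfolding fwd_def
  proof (intro allI impI)
    fix s assume "taylor s (App M N)"
    then obtain s0 ts where s0: "s = RApp s0 ts" "taylor s0 M" "\<forall>u. u \<in># ts \<longrightarrow> taylor u N" by auto
    obtain l where l: "mset l = ts" using ex_mset by blast
    have "\<forall>t\<in>set l. \<exists>T. finite T \<and> (\<forall>x\<in>T. taylor x N') \<and> rsum_steps {t} T"
      using assms s0(3) l unfolding sim_def fwd_def by auto
    then obtain V where V: "\<And>t. t \<in> set l \<Longrightarrow> finite (V t) \<and> (\<forall>x\<in>V t. taylor x N') \<and> rsum_steps {t} (V t)" by metis
    define xs where "xs = map (\<lambda>t. (t, V t)) l"
    have mf: "map fst xs = l" by (simp add: xs_def comp_def)
    have st: "rsum_steps {RApp s0 ({#} + mset (map fst xs))} (Cset s0 {#} xs)"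
      by (rule Cset_steps) (use V in \<open>auto simp: xs_def\<close>)
    have fin: "finite (Cset s0 {#} xs)" by (rule Cset_finite) (use V in \<open>auto simp: xs_def\<close>)
    have ty: "\<forall>v\<in>Cset s0 {#} xs. taylor v (App M N')"
      using Cset_taylor[OF s0(2), of "{#}" N' xs] V by (auto simp: xs_def)
    show "\<exists>T. finite T \<and> (\<forall>t\<in>T. taylor t (App M N')) \<and> rsum_steps {s} T"
      using st fin ty s0(1) l mf by (intro exI[of _ "Cset s0 {#} xs"]) auto
  qed
  moreover have "bwd (App M N) (App M N')" unfolding bwd_def
  proof (intro allI impI)
    fix u assume "taylor u (App M N')"
    then obtain u0 us where u0: "u = RApp u0 us" "taylor u0 M" "\<forall>v. v \<in># us \<longrightarrow> taylor v N'" by auto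
    obtain l where l: "mset l = us" using ex_mset by blast
    have "\<forall>v\<in>set l. \<exists>p. taylor (fst p) N \<and> finite (snd p) \<and> v \<in> snd p \<and> (\<forall>x\<in>snd p. taylor x N') \<and> rsum_steps {fst p} (snd p)"
      using assms u0(3) l unfolding sim_def bwd_def by fastforce
    then obtain g where g: "\<And>v. v \<in> set l \<Longrightarrow> taylor (fst (g v)) N \<and> finite (snd (g v)) \<and> v \<in> snd (g v) \<and> (\<forall>x\<in>snd (g v). taylor x N') \<and> rsum_steps {fst (g v)} (snd (g v))"
      by metis
    define xs where "xs = map g l"
    have la: "list_all2 (\<lambda>u p. u \<in> snd p) l xs"
      unfolding xs_def list_all2_conv_all_nth using g nth_mem by fastforce
    have mem: "u \<in> Cset u0 {#} xs" using Cset_mem[OF la, of u0 "{#}"] u0(1) l by simp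
    have st: "rsum_steps {RApp u0 ({#} + mset (map fst xs))} (Cset u0 {#} xs)"
      by (rule Cset_steps) (use g in \<open>auto simp: xs_def\<close>)
    have fin: "finite (Cset u0 {#} xs)" by (rule Cset_finite) (use g in \<open>auto simp: xs_def\<close>)
    have ty: "\<forall>v\<in>Cset u0 {#} xs. taylor v (App M N')"
      using Cset_taylor[OF u0(2), of "{#}" N' xs] g by (auto simp: xs_def)
    have ts: "taylor (RApp u0 (mset (map fst xs))) (App M N)" using u0(2) g by (auto simp: xs_def)
    show "\<exists>s T. taylor s (App M N) \<and> finite T \<and> u \<in> T \<and> (\<forall>t\<in>T. taylor t (App M N')) \<and> rsum_steps {s} T"
      using ts fin mem ty st by (intro exI[of _ "RApp u0 (mset (map fst xs))"] exI[of _ "Cset u0 {#} xs"]) auto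
  qed
  ultimately show ?thesis unfolding sim_def by blast
qed

lemma sim_redex: "sim (App (Lam M) N) (lsubst M N)"
proof -
  have "fwd (App (Lam M) N) (lsubst M N)" unfolding fwd_def
  proof (intro allI impI)
    fix s assume "taylor s (App (Lam M) N)"
    then obtain s0 ts where s0: "s = RApp (RLam s0) ts" "taylor s0 M" "\<forall>u. u \<in># ts \<longrightarrow> taylor u N" by auto
    have "rsum_steps {s} (rsubst s0 ts)" unfolding s0(1) by (rule rstep_rsum_steps) (rule rstep_redex)
    moreover have "\<forall>t\<in>rsubst s0 ts. taylor t (lsubst M N)"
      using rfill_taylor s0 unfolding rsubst_def lsubst_def by blast
    ultimately show "\<exists>T. finite T \<and> (\<forall>t\<in>T. taylor t (lsubst M N)) \<and> rsum_steps {s} T"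
      using rsubst_finite by blast
  qed
  moreover have "bwd (App (Lam M) N) (lsubst M N)" unfolding bwd_def
  proof (intro allI impI)
    fix u assume "taylor u (lsubst M N)"
    then obtain s0 ts where s0: "taylor s0 M" "\<forall>t. t \<in># ts \<longrightarrow> taylor t N" "rfill 0 s0 ts u"
      using rfill_taylor_inv unfolding lsubst_def by blast
    have "rsum_steps {RApp (RLam s0) ts} (rsubst s0 ts)" by (rule rstep_rsum_steps) (rule rstep_redex)
    moreover have "\<forall>t\<in>rsubst s0 ts. taylor t (lsubst M N)"
      using rfill_taylor s0 unfolding rsubst_def lsubst_def by blast
    moreover have "u \<in> rsubst s0 ts" using s0(3) by (simp add: rsubst_def)
    moreover have "taylor (RApp (RLam s0) ts) (App (Lam M) N)" using s0 by auto
    ultimately show "\<exists>s T. taylor s (App (Lam M) N) \<and> finite T \<and> u \<in> T \<and> (\<forall>t\<in>T. taylor t (lsubst M N)) \<and> rsum_steps {s} T"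
      using rsubst_finite by blast
  qed
  ultimately show ?thesis unfolding sim_def by blast
qed

lemma beta_sim: "beta M N \<Longrightarrow> sim M N"
  by (induction rule: beta.induct) (auto intro: sim_redex sim_lam sim_appL sim_appR)

lemma betas_sim: "betas M N \<Longrightarrow> sim M N"
  by (induction rule: rtranclp_induct) (auto intro: sim_refl sim_trans beta_sim)


definition eqd :: "nat \<Rightarrow> lterm \<Rightarrow> lterm \<Rightarrow> bool" where
  "eqd d M N \<longleftrightarrow> (\<forall>t. sz t \<le> d \<longrightarrow> (taylor t M \<longleftrightarrow> taylor t N))"

lemma betas_lam: "betas P P' \<Longrightarrow> betas (Lam P) (Lam P')"
  by (induction rule: rtranclp_induct) (auto intro: beta_lam rtranclp.rtrancl_into_rtrancl)

lemma betas_appL: "betas P P' \<Longrightarrow> betas (App P Q) (App P' Q)"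
  by (induction rule: rtranclp_induct) (auto intro: beta_appL rtranclp.rtrancl_into_rtrancl)

lemma betas_appR: "betas Q Q' \<Longrightarrow> betas (App P Q) (App P Q')"
  by (induction rule: rtranclp_induct) (auto intro: beta_appR rtranclp.rtrancl_into_rtrancl)

lemma sz_mem: "u \<in># ts \<Longrightarrow> sz u \<le> sum_mset (image_mset sz ts)"
  by (metis image_mset_add_mset le_add1 multi_member_split sum_mset.insert)

lemma ired_approx: "ired M N \<Longrightarrow> \<exists>M'. betas M M' \<and> eqd d M' N \<and> ired M' N"
proof (induction d arbitrary: M N)
  case 0
  have "eqd 0 M N" unfolding eqd_def using sz_pos by (metis le_zero_eq not_one_le_zero)
  then show ?case using 0 by blast
next
  case (Suc d)
  from Suc.prems have "ired_step ired M N" by (cases rule: ired.cases)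
  then show ?case
  proof (induction rule: ired_step.induct)
    case (ired_var M x)
    have "ired (Var x) (Var x)" by (rule ired.intros, rule ired_step.ired_var) simp
    then show ?case using ired_var unfolding eqd_def by blast
  next
    case (ired_lam M P P')
    then obtain P'' where P'': "betas P P''" "eqd (Suc d) P'' P'" "ired P'' P'" by blast
    have b: "betas M (Lam P'')" using ired_lam(1) betas_lam[OF P''(1)] by (rule rtranclp_trans)
    have e: "eqd (Suc d) (Lam P'') (Lam P')"
      unfolding eqd_def
    proof (intro allI impI)
      fix t assume "sz t \<le> Suc d"
      then show "taylor t (Lam P'') \<longleftrightarrow> taylor t (Lam P')"
        using P''(2) unfolding eqd_def by (cases t) auto
    qed
    have st: "ired_step ired P'' P'" using P''(3) by (cases rule: ired.cases)
    have "ired (Lam P'') (Lam P')" by (rule ired.intros, rule ired_step.ired_lam[OF _ st]) simp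
    then show ?case using b e by blast
  next
    case (ired_app M P Q P' Q')
    then obtain P'' where P'': "betas P P''" "eqd (Suc d) P'' P'" "ired P'' P'" by blast
    from Suc.IH[OF \<open>ired Q Q'\<close>] obtain Q'' where Q'': "betas Q Q''" "eqd d Q'' Q'" "ired Q'' Q'" by blast
    have b: "betas M (App P'' Q'')"
      using ired_app(1) betas_appL[OF P''(1)] betas_appR[OF Q''(1)] by (meson rtranclp_trans)
    have e: "eqd (Suc d) (App P'' Q'') (App P' Q')"
      unfolding eqd_def
    proof (intro allI impI)
      fix t assume t: "sz t \<le> Suc d"
      show "taylor t (App P'' Q'') \<longleftrightarrow> taylor t (App P' Q')"
      proof (cases t)
        case (RApp s ts)
        have 1: "sz s \<le> Suc d" using t RApp by simp
        have 2: "\<And>u. u \<in># ts \<Longrightarrow> sz u \<le> d" using t RApp sz_mem by fastforce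
        have "taylor s P'' \<longleftrightarrow> taylor s P'" using P''(2) 1 unfolding eqd_def by blast
        moreover have "\<And>u. u \<in># ts \<Longrightarrow> taylor u Q'' \<longleftrightarrow> taylor u Q'" using Q''(2) 2 unfolding eqd_def by blast
        ultimately show ?thesis using RApp by auto
      qed auto
    qed
    have st: "ired_step ired P'' P'" using P''(3) by (cases rule: ired.cases)
    have "ired (App P'' Q'') (App P' Q')" by (rule ired.intros, rule ired_step.ired_app[OF _ st Q''(3)]) simp
    then show ?case using b e by blast
  qed
qed

theorem mainTheorem8:
  fixes M N :: lterm
  assumes "is001 M" and "is001 N" and "ired M N"
  shows "\<exists>(I :: (rterm \<times> rterm set) set) (s :: rterm \<times> rterm set \<Rightarrow> rterm)
            (T :: rterm \<times> rterm set \<Rightarrow> rterm set).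
           Taylor M = s ` I \<and> Taylor N = (\<Union>i\<in>I. T i) \<and>
           (\<forall>i\<in>I. finite (T i) \<and> rsum_steps {s i} (T i))"
proof -
  define I where "I = {(s,T). taylor s M \<and> finite T \<and> (\<forall>t\<in>T. taylor t N) \<and> rsum_steps {s} T}"
  have 1: "Taylor M = fst ` I"
  proof
    show "fst ` I \<subseteq> Taylor M" by (auto simp: I_def Taylor_def)
    show "Taylor M \<subseteq> fst ` I"
    proof
      fix s assume "s \<in> Taylor M"
      then have s: "taylor s M" by (simp add: Taylor_def)
      obtain M' where M': "betas M M'" "eqd (sz s) M' N" using ired_approx[OF assms(3)] by blast
      obtain T where T: "finite T" "\<forall>t\<in>T. taylor t M'" "rsum_steps {s} T"
        using betas_sim[OF M'(1)] s unfolding sim_def fwd_def by blast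
      have "\<forall>t\<in>T. taylor t N"
      proof
        fix t assume "t \<in> T"
        then have "sz t \<le> sz s" using rsum_steps_sz[OF T(3)] by blast
        then show "taylor t N" using M'(2) T(2) \<open>t \<in> T\<close> unfolding eqd_def by blast
      qed
      then have "(s, T) \<in> I" using s T by (simp add: I_def)
      then show "s \<in> fst ` I" by force
    qed
  qed
  have 2: "Taylor N = (\<Union>i\<in>I. snd i)"
  proof
    show "(\<Union>i\<in>I. snd i) \<subseteq> Taylor N" by (auto simp: I_def Taylor_def)
    show "Taylor N \<subseteq> (\<Union>i\<in>I. snd i)"
    proof
      fix u assume "u \<in> Taylor N"
      then have u: "taylor u N" by (simp add: Taylor_def)
      obtain M1 where M1: "betas M M1" "eqd (sz u) M1 N" "ired M1 N" using ired_approx[OF assms(3)] by blast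
      have u1: "taylor u M1" using M1(2) u unfolding eqd_def by blast
      obtain s T where sT: "taylor s M" "finite T" "u \<in> T" "\<forall>t\<in>T. taylor t M1" "rsum_steps {s} T"
        using betas_sim[OF M1(1)] u1 unfolding sim_def bwd_def by blast
      obtain M2 where M2: "betas M1 M2" "eqd (sz s) M2 N" using ired_approx[OF M1(3)] by blast
      have "\<forall>t\<in>T. \<exists>U. finite U \<and> (\<forall>x\<in>U. taylor x M2) \<and> rsum_steps {t} U"
        using betas_sim[OF M2(1)] sT(4) unfolding sim_def fwd_def by blast
      then obtain V where V: "\<And>t. t \<in> T \<Longrightarrow> finite (V t) \<and> (\<forall>x\<in>V t. taylor x M2) \<and> rsum_steps {t} (V t)" by metis
      define W where "W t = (if t = u then {u} else V t)" for t
      have W: "\<And>t. t \<in> T \<Longrightarrow> finite (W t) \<and> rsum_steps {t} (W t)"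
        using V by (simp add: W_def)
      have st: "rsum_steps {s} (\<Union>(W ` T))" using rsum_steps_bind[OF sT(5) sT(2)] W by blast
      have fin: "finite (\<Union>(W ` T))" using W sT(2) by blast
      have ty: "\<forall>x\<in>\<Union>(W ` T). taylor x N"
      proof
        fix x assume x: "x \<in> \<Union>(W ` T)"
        then obtain t where t: "t \<in> T" "x \<in> W t" by blast
        show "taylor x N"
        proof (cases "t = u")
          case True then show ?thesis using t u by (simp add: W_def)
        next
          case False
          then have "taylor x M2" using t V by (simp add: W_def)
          moreover have "sz x \<le> sz s" using rsum_steps_sz[OF st x] by blast
          ultimately show ?thesis using M2(2) unfolding eqd_def by blast
        qed
      qed
      have "u \<in> \<Union>(W ` T)" using sT(3) by (auto simp: W_def intro!: bexI[of _ u])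
      moreover have "(s, \<Union>(W ` T)) \<in> I" using sT(1) fin ty st by (simp add: I_def)
      ultimately show "u \<in> (\<Union>i\<in>I. snd i)" by force
    qed
  qed
  have 3: "\<forall>i\<in>I. finite (snd i) \<and> rsum_steps {fst i} (snd i)" by (auto simp: I_def)
  show ?thesis using 1 2 3 by blast
qed

end
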